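(* Let $E$ be a normed space over $\mathbb K$. Let $\ell^\infty(E)$ be the space of bounded sequences $(f_n)_{n\in\mathbb N}$ in $E$ with the norm $\|(f_n)\|=\sup_n\|f_n\|$, and $c_0(E)=\{(f_n)\in\ell^\infty(E): \|f_n\|\to0\}$. Then (1) $c_0(E)$ is a closed linear subspace of $\ell^\infty(E)$, so $\ell^\infty(E)/c_0(E)$ with the quotient norm is a normed space over $\mathbb K$; (2) $\ell^\infty(E)/c_0(E)$ is spherically complete; (3) the diagonal map $E\to\ell^\infty(E)/c_0(E)$, $x\mapsto[(x,x,x,\dots)]$, is a linear isometry. In particular every normed space over $\mathbb K$ embeds linearly isometrically into a spherically complete normed space over $\mathbb K$.
   Context: $\mathbb K$: nontrivially normed field with ultrametric absolute value; normed space over $\mathbb K$: normed vector space with $\|x+y\|\le\max(\|x\|,\|y\|)$. Spherically complete: every decreasing sequence of closed balls (radii $\ge0$) has nonempty intersection. *)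

theory Defs
  imports Complex_Main
begin

definition nonarch_abs_field :: "('k::field \<Rightarrow> real) \<Rightarrow> bool" where
  "nonarch_abs_field av \<longleftrightarrow>
     (\<forall>x. av x \<ge> 0) \<and> (\<forall>x. av x = 0 \<longleftrightarrow> x = 0) \<and>
     (\<forall>x y. av (x * y) = av x * av y) \<and>
     (\<forall>x y. av (x + y) \<le> max (av x) (av y)) \<and>
     (\<exists>x. av x \<noteq> 0 \<and> av x \<noteq> 1)"

record ('k, 'v) nspace =
  ns_carrier :: "'v set"
  ns_zero :: "'v"
  ns_add :: "'v \<Rightarrow> 'v \<Rightarrow> 'v"
  ns_smul :: "'k \<Rightarrow> 'v \<Rightarrow> 'v"
  ns_norm :: "'v \<Rightarrow> real"

definition ns_sub :: "('k::field, 'v) nspace \<Rightarrow> 'v \<Rightarrow> 'v \<Rightarrow> 'v" where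
  "ns_sub E x y = ns_add E x (ns_smul E (-1) y)"

definition vector_space_on :: "('k::field, 'v) nspace \<Rightarrow> bool" where
  "vector_space_on E \<longleftrightarrow>
     ns_zero E \<in> ns_carrier E \<and>
     (\<forall>x\<in>ns_carrier E. \<forall>y\<in>ns_carrier E. ns_add E x y \<in> ns_carrier E) \<and>
     (\<forall>c. \<forall>x\<in>ns_carrier E. ns_smul E c x \<in> ns_carrier E) \<and>
     (\<forall>x\<in>ns_carrier E. \<forall>y\<in>ns_carrier E. \<forall>z\<in>ns_carrier E.
        ns_add E (ns_add E x y) z = ns_add E x (ns_add E y z)) \<and>
     (\<forall>x\<in>ns_carrier E. \<forall>y\<in>ns_carrier E. ns_add E x y = ns_add E y x) \<and>
     (\<forall>x\<in>ns_carrier E. ns_add E (ns_zero E) x = x) \<and>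
     (\<forall>x\<in>ns_carrier E. ns_add E x (ns_smul E (-1) x) = ns_zero E) \<and>
     (\<forall>x\<in>ns_carrier E. ns_smul E 1 x = x) \<and>
     (\<forall>a b. \<forall>x\<in>ns_carrier E. ns_smul E (a * b) x = ns_smul E a (ns_smul E b x)) \<and>
     (\<forall>a b. \<forall>x\<in>ns_carrier E. ns_smul E (a + b) x = ns_add E (ns_smul E a x) (ns_smul E b x)) \<and>
     (\<forall>a. \<forall>x\<in>ns_carrier E. \<forall>y\<in>ns_carrier E.
        ns_smul E a (ns_add E x y) = ns_add E (ns_smul E a x) (ns_smul E a y))"

definition nonarch_normed_space :: "('k::field \<Rightarrow> real) \<Rightarrow> ('k, 'v) nspace \<Rightarrow> bool" where
  "nonarch_normed_space av E \<longleftrightarrow>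
     vector_space_on E \<and>
     (\<forall>x\<in>ns_carrier E. ns_norm E x \<ge> 0) \<and>
     (\<forall>x\<in>ns_carrier E. ns_norm E x = 0 \<longleftrightarrow> x = ns_zero E) \<and>
     (\<forall>c. \<forall>x\<in>ns_carrier E. ns_norm E (ns_smul E c x) = av c * ns_norm E x) \<and>
     (\<forall>x\<in>ns_carrier E. \<forall>y\<in>ns_carrier E.
        ns_norm E (ns_add E x y) \<le> max (ns_norm E x) (ns_norm E y))"

definition ns_cball :: "('k::field, 'v) nspace \<Rightarrow> 'v \<Rightarrow> real \<Rightarrow> 'v set" where
  "ns_cball E c r = {x \<in> ns_carrier E. ns_norm E (ns_sub E x c) \<le> r}"

definition spherically_complete :: "('k::field, 'v) nspace \<Rightarrow> bool" where
  "spherically_complete E \<longleftrightarrow>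
     (\<forall>c r. (\<forall>n. c n \<in> ns_carrier E \<and> r n \<ge> 0) \<and>
            (\<forall>n. ns_cball E (c (Suc n)) (r (Suc n)) \<subseteq> ns_cball E (c n) (r n))
        \<longrightarrow> (\<Inter>n. ns_cball E (c n) (r n)) \<noteq> {})"

definition linear_subspace_on :: "('k::field, 'v) nspace \<Rightarrow> 'v set \<Rightarrow> bool" where
  "linear_subspace_on E W \<longleftrightarrow> W \<subseteq> ns_carrier E \<and> ns_zero E \<in> W \<and>
     (\<forall>x\<in>W. \<forall>y\<in>W. ns_add E x y \<in> W) \<and> (\<forall>c. \<forall>x\<in>W. ns_smul E c x \<in> W)"

definition closed_in_ns :: "('k::field, 'v) nspace \<Rightarrow> 'v set \<Rightarrow> bool" where
  "closed_in_ns E W \<longleftrightarrow>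
     (\<forall>x\<in>ns_carrier E. (\<forall>e>0. \<exists>w\<in>W. ns_norm E (ns_sub E x w) < e) \<longrightarrow> x \<in> W)"

definition linf :: "('k::field, 'v) nspace \<Rightarrow> ('k, nat \<Rightarrow> 'v) nspace" where
  "linf E = \<lparr> ns_carrier = {f. (\<forall>n. f n \<in> ns_carrier E) \<and> (\<exists>B. \<forall>n. ns_norm E (f n) \<le> B)},
             ns_zero = (\<lambda>n. ns_zero E),
             ns_add = (\<lambda>f g n. ns_add E (f n) (g n)),
             ns_smul = (\<lambda>c f n. ns_smul E c (f n)),
             ns_norm = (\<lambda>f. SUP n. ns_norm E (f n)) \<rparr>"

definition c0 :: "('k::field, 'v) nspace \<Rightarrow> (nat \<Rightarrow> 'v) set" where
  "c0 E = {f \<in> ns_carrier (linf E). (\<lambda>n. ns_norm E (f n)) \<longlonglongrightarrow> 0}"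

definition ns_coset :: "('k::field, 'v) nspace \<Rightarrow> 'v set \<Rightarrow> 'v \<Rightarrow> 'v set" where
  "ns_coset S W f = {ns_add S f w | w. w \<in> W}"

definition ns_rep :: "'v set \<Rightarrow> 'v" where
  "ns_rep C = (SOME f. f \<in> C)"

definition quot :: "('k::field, 'v) nspace \<Rightarrow> 'v set \<Rightarrow> ('k, 'v set) nspace" where
  "quot S W = \<lparr> ns_carrier = ns_coset S W ` ns_carrier S,
               ns_zero = ns_coset S W (ns_zero S),
               ns_add = (\<lambda>C D. ns_coset S W (ns_add S (ns_rep C) (ns_rep D))),
               ns_smul = (\<lambda>c C. ns_coset S W (ns_smul S c (ns_rep C))),
               ns_norm = (\<lambda>C. Inf (ns_norm S ` C)) \<rparr>"

definition diag_map :: "('k::field, 'v) nspace \<Rightarrow> 'v \<Rightarrow> (nat \<Rightarrow> 'v) set" where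
  "diag_map E x = ns_coset (linf E) (c0 E) (\<lambda>n. x)"

definition linear_isometry :: "('k::field, 'v) nspace \<Rightarrow> ('k, 'w) nspace \<Rightarrow> ('v \<Rightarrow> 'w) \<Rightarrow> bool" where
  "linear_isometry E F j \<longleftrightarrow>
     (\<forall>x\<in>ns_carrier E. j x \<in> ns_carrier F) \<and>
     (\<forall>x\<in>ns_carrier E. \<forall>y\<in>ns_carrier E. j (ns_add E x y) = ns_add F (j x) (j y)) \<and>
     (\<forall>c. \<forall>x\<in>ns_carrier E. j (ns_smul E c x) = ns_smul F c (j x)) \<and>
     (\<forall>x\<in>ns_carrier E. ns_norm F (j x) = ns_norm E x)"

end

theory Submission
  imports Defs
begin

locale nns =
  fixes av :: "'k::field \<Rightarrow> real" and E :: "('k, 'v) nspace"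
  assumes AV: "nonarch_abs_field av" and NS: "nonarch_normed_space av E"
begin

abbreviation "V \<equiv> ns_carrier E"
abbreviation "pl \<equiv> ns_add E"
abbreviation "sm \<equiv> ns_smul E"
abbreviation "nm \<equiv> ns_norm E"
abbreviation "zr \<equiv> ns_zero E"
abbreviation "mi \<equiv> ns_sub E"

lemma av_nonneg: "av x \<ge> 0" using AV unfolding nonarch_abs_field_def by auto
lemma av_zero_iff: "av x = 0 \<longleftrightarrow> x = 0" using AV unfolding nonarch_abs_field_def by auto
lemma av_mult: "av (x * y) = av x * av y" using AV unfolding nonarch_abs_field_def by auto
lemma av_1: "av 1 = 1"
proof -
  have "av 1 = av 1 * av 1" using av_mult[of 1 1] by simp
  moreover have "av 1 \<noteq> 0" using av_zero_iff by simp
  ultimately show ?thesis by simp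
qed
lemma av_m1: "av (-1) = 1"
proof -
  have h: "av (-1) * av (-1) = 1" using av_mult[of "-1" "-1"] av_1 by simp
  have "av (-1) \<ge> 0" by (rule av_nonneg)
  then show ?thesis using h
  proof (cases "av (-1) < 1")
    case True
    then have "av (-1) * av (-1) \<le> av (-1) * 1" using \<open>av (-1) \<ge> 0\<close> by (intro mult_left_mono) auto
    then show ?thesis using h True by simp
  next
    case False
    then have "1 * 1 \<le> av (-1) * av (-1)" by (intro mult_mono) auto
    moreover have "av (-1) * 1 \<le> av (-1) * av (-1)" using False \<open>av (-1) \<ge> 0\<close> by (intro mult_left_mono) auto
    ultimately show ?thesis using h False by simp
  qed
qed
lemma av_inverse: "c \<noteq> 0 \<Longrightarrow> av (inverse c) = inverse (av c)"
proof -
  assume "c \<noteq> 0"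
  then have "av c * av (inverse c) = 1" using av_mult[of c "inverse c"] av_1 by simp
  then show ?thesis using av_zero_iff[of c] \<open>c \<noteq> 0\<close> by (simp add: field_simps)
qed

lemma av_0[simp]: "av 0 = 0" using av_zero_iff by simp

lemma VS: "vector_space_on E" using NS unfolding nonarch_normed_space_def by auto

lemma zero_in[simp]: "zr \<in> V" using VS unfolding vector_space_on_def by auto
lemma add_in[simp]: "x \<in> V \<Longrightarrow> y \<in> V \<Longrightarrow> pl x y \<in> V" using VS unfolding vector_space_on_def by auto
lemma smul_in[simp]: "x \<in> V \<Longrightarrow> sm c x \<in> V" using VS unfolding vector_space_on_def by auto
lemma add_assoc: "x \<in> V \<Longrightarrow> y \<in> V \<Longrightarrow> z \<in> V \<Longrightarrow> pl (pl x y) z = pl x (pl y z)"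
  using VS unfolding vector_space_on_def by auto
lemma add_comm: "x \<in> V \<Longrightarrow> y \<in> V \<Longrightarrow> pl x y = pl y x"
  using VS unfolding vector_space_on_def by auto
lemma zero_add[simp]: "x \<in> V \<Longrightarrow> pl zr x = x" using VS unfolding vector_space_on_def by auto
lemma add_neg[simp]: "x \<in> V \<Longrightarrow> pl x (sm (-1) x) = zr" using VS unfolding vector_space_on_def by auto
lemma smul_one[simp]: "x \<in> V \<Longrightarrow> sm 1 x = x" using VS unfolding vector_space_on_def by auto
lemma smul_mult: "x \<in> V \<Longrightarrow> sm (a * b) x = sm a (sm b x)" using VS unfolding vector_space_on_def by auto
lemma smul_distl: "x \<in> V \<Longrightarrow> sm (a + b) x = pl (sm a x) (sm b x)" using VS unfolding vector_space_on_def by auto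
lemma smul_distr: "x \<in> V \<Longrightarrow> y \<in> V \<Longrightarrow> sm a (pl x y) = pl (sm a x) (sm a y)" using VS unfolding vector_space_on_def by auto
lemma norm_nonneg[simp]: "x \<in> V \<Longrightarrow> nm x \<ge> 0" using NS unfolding nonarch_normed_space_def by auto
lemma norm_zero_iff: "x \<in> V \<Longrightarrow> nm x = 0 \<longleftrightarrow> x = zr" using NS unfolding nonarch_normed_space_def by auto
lemma norm_smul: "x \<in> V \<Longrightarrow> nm (sm c x) = av c * nm x" using NS unfolding nonarch_normed_space_def by auto
lemma norm_ultra: "x \<in> V \<Longrightarrow> y \<in> V \<Longrightarrow> nm (pl x y) \<le> max (nm x) (nm y)" using NS unfolding nonarch_normed_space_def by auto

lemma norm_zero[simp]: "nm zr = 0" using norm_zero_iff zero_in by blast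
lemma add_zero[simp]: "x \<in> V \<Longrightarrow> pl x zr = x" using add_comm zero_add zero_in by metis
lemma add_lcomm: "x \<in> V \<Longrightarrow> y \<in> V \<Longrightarrow> z \<in> V \<Longrightarrow> pl x (pl y z) = pl y (pl x z)"
  by (simp add: add_assoc[symmetric] add_comm[of x y])
lemma sub_def': "mi x y = pl x (sm (-1) y)" by (simp add: ns_sub_def)
lemma sub_in[simp]: "x \<in> V \<Longrightarrow> y \<in> V \<Longrightarrow> mi x y \<in> V" by (simp add: sub_def')
lemma smul_zero[simp]: "sm c zr = zr"
  using norm_smul[of zr c] norm_zero_iff[of "sm c zr"] by simp
lemma zero_smul[simp]: "x \<in> V \<Longrightarrow> sm 0 x = zr"
  using norm_smul[of x 0] norm_zero_iff[of "sm 0 x"] av_zero_iff by simp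
lemma norm_neg[simp]: "x \<in> V \<Longrightarrow> nm (sm (-1) x) = nm x" by (simp add: norm_smul av_m1)
lemma neg_neg[simp]: "x \<in> V \<Longrightarrow> sm (-1) (sm (-1) x) = x"
  by (simp flip: smul_mult)
lemma neg_add: "x \<in> V \<Longrightarrow> pl (sm (-1) x) x = zr" using add_comm[of x "sm (-1) x"] by simp
lemma sub_self[simp]: "x \<in> V \<Longrightarrow> mi x x = zr" by (simp add: sub_def')
lemma sub_zero[simp]: "x \<in> V \<Longrightarrow> mi x zr = x" by (simp add: sub_def')
lemma add_sub_cancel[simp]: "x \<in> V \<Longrightarrow> y \<in> V \<Longrightarrow> pl x (mi y x) = y"
  by (simp add: sub_def' add_lcomm[of x y])
lemma add_sub_cancel2[simp]: "x \<in> V \<Longrightarrow> y \<in> V \<Longrightarrow> mi (pl x y) x = y"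
  by (simp add: sub_def' add_assoc add_lcomm[of x y])
lemma eq_iff_sub: "x \<in> V \<Longrightarrow> y \<in> V \<Longrightarrow> mi x y = zr \<longleftrightarrow> x = y"
proof
  assume "x \<in> V" "y \<in> V" "mi x y = zr"
  then have "pl y (mi x y) = x" by (intro add_sub_cancel)
  then show "x = y" using \<open>mi x y = zr\<close> \<open>y \<in> V\<close> by simp
qed simp
lemma neg_sub: "x \<in> V \<Longrightarrow> y \<in> V \<Longrightarrow> sm (-1) (mi x y) = mi y x"
  by (simp add: sub_def' smul_distr add_comm[of "sm (-1) x" y])
lemma norm_sub_comm: "x \<in> V \<Longrightarrow> y \<in> V \<Longrightarrow> nm (mi x y) = nm (mi y x)"
  using neg_sub[of x y] norm_neg[of "mi x y"] by simp
lemma sub_trans: "x \<in> V \<Longrightarrow> y \<in> V \<Longrightarrow> w \<in> V \<Longrightarrow> mi x w = pl (mi x y) (mi y w)"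
  by (simp add: sub_def' add_assoc neg_add flip: add_assoc[of "sm (-1) y" y "sm (-1) w"])
lemma add_sub_add: "a \<in> V \<Longrightarrow> b \<in> V \<Longrightarrow> c \<in> V \<Longrightarrow> d \<in> V \<Longrightarrow>
   mi (pl a b) (pl c d) = pl (mi a c) (mi b d)"
  by (simp add: sub_def' smul_distr add_assoc add_lcomm[of b "sm (-1) c"])
lemma smul_sub: "x \<in> V \<Longrightarrow> y \<in> V \<Longrightarrow> mi (sm c x) (sm c y) = sm c (mi x y)"
  by (simp add: sub_def' smul_distr flip: smul_mult)
lemma smul_inv: "c \<noteq> 0 \<Longrightarrow> x \<in> V \<Longrightarrow> sm (inverse c) (sm c x) = x"
  by (simp flip: smul_mult)
lemma norm_sub_le: "x \<in> V \<Longrightarrow> y \<in> V \<Longrightarrow> nm (mi x y) \<le> max (nm x) (nm y)"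
  using norm_ultra[of x "sm (-1) y"] by (simp add: sub_def')
lemma norm_le_max_sub: "a \<in> V \<Longrightarrow> b \<in> V \<Longrightarrow> nm b \<le> max (nm a) (nm (mi a b))"
  using norm_ultra[of a "mi b a"] norm_sub_comm[of a b] by simp
lemma zero_sub: "x \<in> V \<Longrightarrow> mi zr x = sm (-1) x" by (simp add: sub_def')

end

locale nnsq = nns +
  fixes W
  assumes SUB: "linear_subspace_on E W" and CL: "closed_in_ns E W"
begin

abbreviation "cs \<equiv> ns_coset E W"
abbreviation "Q \<equiv> quot E W"

lemma W_sub: "w \<in> W \<Longrightarrow> w \<in> V" using SUB unfolding linear_subspace_on_def by auto
lemma W_zero[simp]: "zr \<in> W" using SUB unfolding linear_subspace_on_def by auto
lemma W_add: "x \<in> W \<Longrightarrow> y \<in> W \<Longrightarrow> pl x y \<in> W" using SUB unfolding linear_subspace_on_def by auto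
lemma W_smul: "x \<in> W \<Longrightarrow> sm c x \<in> W" using SUB unfolding linear_subspace_on_def by auto
lemma W_closed: "x \<in> V \<Longrightarrow> (\<And>e. e > 0 \<Longrightarrow> \<exists>w\<in>W. nm (mi x w) < e) \<Longrightarrow> x \<in> W"
  using CL unfolding closed_in_ns_def by auto

lemma mem_cs: "f \<in> V \<Longrightarrow> g \<in> cs f \<longleftrightarrow> g \<in> V \<and> mi g f \<in> W"
proof
  assume f: "f \<in> V" and "g \<in> cs f"
  then obtain w where w: "w \<in> W" "g = pl f w" unfolding ns_coset_def by auto
  then show "g \<in> V \<and> mi g f \<in> W" using f W_sub by auto
next
  assume f: "f \<in> V" and "g \<in> V \<and> mi g f \<in> W"
  then have "g = pl f (mi g f)" by simp
  then show "g \<in> cs f" unfolding ns_coset_def using \<open>g \<in> V \<and> mi g f \<in> W\<close> by blast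
qed

lemma self_cs: "f \<in> V \<Longrightarrow> f \<in> cs f" by (simp add: mem_cs)

lemma cs_sub: "f \<in> V \<Longrightarrow> cs f \<subseteq> V" by (auto simp: mem_cs)

lemma cs_eq: assumes "f \<in> V" "g \<in> V" shows "cs f = cs g \<longleftrightarrow> mi f g \<in> W"
proof
  assume "cs f = cs g" then show "mi f g \<in> W" using self_cs[OF assms(1)] mem_cs[OF assms(2)] by auto
next
  assume h: "mi f g \<in> W"
  have h2: "mi g f \<in> W" using W_smul[OF h, of "-1"] neg_sub assms by simp
  show "cs f = cs g"
  proof (rule set_eqI)
    fix x
    show "x \<in> cs f \<longleftrightarrow> x \<in> cs g"
    proof
      assume "x \<in> cs f"
      then have "x \<in> V" "mi x f \<in> W" using mem_cs assms by auto
      then show "x \<in> cs g" using mem_cs assms W_add[OF _ h] sub_trans[of x f g] by auto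
    next
      assume "x \<in> cs g"
      then have "x \<in> V" "mi x g \<in> W" using mem_cs assms by auto
      then show "x \<in> cs f" using mem_cs assms W_add[OF _ h2] sub_trans[of x g f] by auto
    qed
  qed
qed

lemma rep_cs: "f \<in> V \<Longrightarrow> ns_rep (cs f) \<in> V \<and> mi (ns_rep (cs f)) f \<in> W"
  unfolding ns_rep_def using someI[of "\<lambda>x. x \<in> cs f", OF self_cs] mem_cs by blast

lemma Q_car: "ns_carrier Q = cs ` V" by (simp add: quot_def)
lemma Q_zero: "ns_zero Q = cs zr" by (simp add: quot_def)
lemma Q_norm: "ns_norm Q C = Inf (nm ` C)" by (simp add: quot_def)
lemma Q_add: assumes "f \<in> V" "g \<in> V" shows "ns_add Q (cs f) (cs g) = cs (pl f g)"
proof -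
  let ?a = "ns_rep (cs f)" and ?b = "ns_rep (cs g)"
  have "mi (pl ?a ?b) (pl f g) \<in> W" using rep_cs[OF assms(1)] rep_cs[OF assms(2)] assms
    by (simp add: add_sub_add W_add)
  then show ?thesis using rep_cs assms by (simp add: quot_def cs_eq)
qed
lemma Q_smul: assumes "f \<in> V" shows "ns_smul Q c (cs f) = cs (sm c f)"
proof -
  let ?a = "ns_rep (cs f)"
  have "mi (sm c ?a) (sm c f) \<in> W" using rep_cs[OF assms(1)] assms
    by (simp add: smul_sub W_smul)
  then show ?thesis using rep_cs assms by (simp add: quot_def cs_eq)
qed
lemma Q_sub: assumes "f \<in> V" "g \<in> V" shows "ns_sub Q (cs f) (cs g) = cs (mi f g)"
  using assms by (simp add: ns_sub_def[of Q] Q_smul Q_add sub_def')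

lemma cs_comm: "x \<in> V \<Longrightarrow> y \<in> V \<Longrightarrow> cs (pl x y) = cs (pl y x)"
  by (simp add: add_comm)

lemma VSQ: "vector_space_on Q"
  unfolding vector_space_on_def Q_car Q_zero
proof (intro conjI)
  show "\<forall>x\<in>cs ` V. \<forall>y\<in>cs ` V. ns_add Q x y \<in> cs ` V" by (auto simp: Q_add)
  show "\<forall>c. \<forall>x\<in>cs ` V. ns_smul Q c x \<in> cs ` V" by (auto simp: Q_smul)
  show "\<forall>x\<in>cs ` V. \<forall>y\<in>cs ` V. \<forall>z\<in>cs ` V. ns_add Q (ns_add Q x y) z = ns_add Q x (ns_add Q y z)"
    by (auto simp: Q_add add_assoc)
  show "\<forall>x\<in>cs ` V. \<forall>y\<in>cs ` V. ns_add Q x y = ns_add Q y x" by (auto simp: Q_add cs_comm)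
  show "\<forall>x\<in>cs ` V. ns_add Q (cs zr) x = x" by (auto simp: Q_add)
  show "\<forall>x\<in>cs ` V. ns_add Q x (ns_smul Q (- 1) x) = cs zr" by (auto simp: Q_add Q_smul)
  show "\<forall>x\<in>cs ` V. ns_smul Q 1 x = x" by (auto simp: Q_smul)
  show "\<forall>a b. \<forall>x\<in>cs ` V. ns_smul Q (a * b) x = ns_smul Q a (ns_smul Q b x)"
    by (auto simp: Q_smul smul_mult)
  show "\<forall>a b. \<forall>x\<in>cs ` V. ns_smul Q (a + b) x = ns_add Q (ns_smul Q a x) (ns_smul Q b x)"
    by (auto simp: Q_smul Q_add smul_distl)
  show "\<forall>a. \<forall>x\<in>cs ` V. \<forall>y\<in>cs ` V. ns_smul Q a (ns_add Q x y) = ns_add Q (ns_smul Q a x) (ns_smul Q a y)"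
    by (auto simp: Q_smul Q_add smul_distr)
  show "cs zr \<in> cs ` V" by simp
qed

lemma Qn_nonneg: "f \<in> V \<Longrightarrow> Inf (nm ` cs f) \<ge> 0"
  using self_cs[of f] by (intro cInf_greatest) (force, auto simp: mem_cs)
lemma bddQ: "f \<in> V \<Longrightarrow> bdd_below (nm ` cs f)"
  by (intro bdd_belowI[of _ 0]) (auto simp: mem_cs)

lemma Qn_le: "f \<in> V \<Longrightarrow> x \<in> cs f \<Longrightarrow> Inf (nm ` cs f) \<le> nm x"
  using bddQ by (intro cInf_lower) auto

lemma Qn_lt: "f \<in> V \<Longrightarrow> Inf (nm ` cs f) < r \<Longrightarrow> \<exists>x\<in>cs f. nm x < r"
  using bddQ self_cs cInf_less_iff[of "nm ` cs f" r] by auto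

lemma Qn_zero: "f \<in> V \<Longrightarrow> Inf (nm ` cs f) = 0 \<longleftrightarrow> cs f = cs zr"
proof
  assume f: "f \<in> V" and h: "Inf (nm ` cs f) = 0"
  have "f \<in> W"
  proof (rule W_closed[OF f])
    fix e :: real assume "e > 0"
    then obtain x where x: "x \<in> cs f" "nm x < e" using Qn_lt[OF f] h by auto
    then have xV: "x \<in> V" and "mi x f \<in> W" using mem_cs f by auto
    have "sm (-1) (mi x f) \<in> W" by (rule W_smul[OF \<open>mi x f \<in> W\<close>])
    moreover have "sm (-1) (mi x f) = mi f x" using neg_sub xV f by simp
    moreover have "mi f (mi f x) = x"
    proof -
      have "mi f (mi f x) = pl f (sm (-1) (mi f x))" by (rule sub_def')
      also have "\<dots> = pl f (mi x f)" using neg_sub[of f x] xV f by simp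
      also have "\<dots> = x" using xV f by simp
      finally show ?thesis .
    qed
    ultimately show "\<exists>w\<in>W. nm (mi f w) < e" using x by metis
  qed
  then show "cs f = cs zr" using f by (simp add: cs_eq)
next
  assume f: "f \<in> V" and "cs f = cs zr"
  then have "Inf (nm ` cs f) \<le> nm zr" using Qn_le[OF f, of zr] self_cs[of zr] by simp
  then show "Inf (nm ` cs f) = 0" using Qn_nonneg[OF f] by simp
qed

lemma Qn_smul_le: assumes f: "f \<in> V" shows "Inf (nm ` cs (sm c f)) \<le> av c * Inf (nm ` cs f)"
proof (cases "c = 0")
  case True
  then have "Inf (nm ` cs (sm c f)) = 0" using f Qn_zero by simp
  then show ?thesis using True av_zero_iff by simp
next
  case False
  then have pos: "av c > 0" using av_zero_iff av_nonneg by (metis less_eq_real_def)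
  have "Inf (nm ` cs (sm c f)) / av c \<le> Inf (nm ` cs f)"
  proof (rule cInf_greatest)
    show "nm ` cs f \<noteq> {}" using self_cs f by auto
  next
    fix t assume "t \<in> nm ` cs f"
    then obtain x where x: "x \<in> cs f" "t = nm x" by auto
    then have xV: "x \<in> V" "mi x f \<in> W" using mem_cs f by auto
    then have "sm c x \<in> cs (sm c f)" using mem_cs f smul_sub W_smul by simp
    then have "Inf (nm ` cs (sm c f)) \<le> nm (sm c x)" using Qn_le[of "sm c f" "sm c x"] f by simp
    then have "Inf (nm ` cs (sm c f)) \<le> av c * t" using norm_smul[of x c] xV x by simp
    then show "Inf (nm ` cs (sm c f)) / av c \<le> t" using pos by (simp add: field_simps)
  qed
  then show ?thesis using pos by (simp add: field_simps)
qed

lemma Qn_smul: assumes f: "f \<in> V" shows "Inf (nm ` cs (sm c f)) = av c * Inf (nm ` cs f)"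
proof (cases "c = 0")
  case True
  then show ?thesis using Qn_smul_le[OF f, of c] Qn_nonneg[of "sm c f"] f av_zero_iff by simp
next
  case False
  have "Inf (nm ` cs f) \<le> av (inverse c) * Inf (nm ` cs (sm c f))"
    using Qn_smul_le[of "sm c f" "inverse c"] f smul_inv[OF False f] by simp
  then have "av c * Inf (nm ` cs f) \<le> av c * (av (inverse c) * Inf (nm ` cs (sm c f)))"
    using av_nonneg[of c] by (rule mult_left_mono)
  then have "av c * Inf (nm ` cs f) \<le> Inf (nm ` cs (sm c f))"
    using False av_inverse[OF False] av_zero_iff[of c] by (simp add: mult.assoc[symmetric])
  then show ?thesis using Qn_smul_le[OF f, of c] by simp
qed

lemma Qn_ultra: assumes f: "f \<in> V" and g: "g \<in> V"
  shows "Inf (nm ` cs (pl f g)) \<le> max (Inf (nm ` cs f)) (Inf (nm ` cs g))"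
proof (rule field_le_epsilon)
  fix e :: real assume "e > 0"
  obtain x where x: "x \<in> cs f" "nm x < Inf (nm ` cs f) + e" using Qn_lt[OF f] \<open>e > 0\<close> by force
  obtain y where y: "y \<in> cs g" "nm y < Inf (nm ` cs g) + e" using Qn_lt[OF g] \<open>e > 0\<close> by force
  have xV: "x \<in> V" "mi x f \<in> W" using x mem_cs f by auto
  have yV: "y \<in> V" "mi y g \<in> W" using y mem_cs g by auto
  have "pl x y \<in> cs (pl f g)" using mem_cs f g xV yV add_sub_add W_add by simp
  then have "Inf (nm ` cs (pl f g)) \<le> nm (pl x y)" using Qn_le f g by simp
  also have "\<dots> \<le> max (nm x) (nm y)" using norm_ultra xV yV by simp
  finally show "Inf (nm ` cs (pl f g)) \<le> max (Inf (nm ` cs f)) (Inf (nm ` cs g)) + e"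
    using x y by linarith
qed

lemma NSQ: "nonarch_normed_space av Q"
  unfolding nonarch_normed_space_def
proof (intro conjI)
  show "vector_space_on Q" by (rule VSQ)
  show "\<forall>x\<in>ns_carrier Q. 0 \<le> ns_norm Q x" by (auto simp: Q_car Q_norm Qn_nonneg)
  show "\<forall>x\<in>ns_carrier Q. (ns_norm Q x = 0) = (x = ns_zero Q)" by (auto simp: Q_car Q_norm Q_zero Qn_zero)
  show "\<forall>c. \<forall>x\<in>ns_carrier Q. ns_norm Q (ns_smul Q c x) = av c * ns_norm Q x"
    by (auto simp: Q_car Q_norm Q_smul Qn_smul)
  show "\<forall>x\<in>ns_carrier Q. \<forall>y\<in>ns_carrier Q. ns_norm Q (ns_add Q x y) \<le> max (ns_norm Q x) (ns_norm Q y)"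
    by (auto simp: Q_car Q_norm Q_add Qn_ultra)
qed

end

context nns
begin

lemma L_car: "f \<in> ns_carrier (linf E) \<longleftrightarrow> (\<forall>n. f n \<in> V) \<and> (\<exists>B. \<forall>n. nm (f n) \<le> B)"
  by (simp add: linf_def)
lemma L_zero: "ns_zero (linf E) = (\<lambda>n. zr)" by (simp add: linf_def)
lemma L_add: "ns_add (linf E) f g = (\<lambda>n. pl (f n) (g n))" by (simp add: linf_def)
lemma L_smul: "ns_smul (linf E) c f = (\<lambda>n. sm c (f n))" by (simp add: linf_def)
lemma L_norm: "ns_norm (linf E) f = (SUP n. nm (f n))" by (simp add: linf_def)
lemma L_sub: "ns_sub (linf E) f g = (\<lambda>n. mi (f n) (g n))" by (simp add: linf_def ns_sub_def)

lemma L_bdd: "f \<in> ns_carrier (linf E) \<Longrightarrow> bdd_above (range (\<lambda>n. nm (f n)))"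
  unfolding L_car by (auto intro: bdd_aboveI2)

lemma L_le: "f \<in> ns_carrier (linf E) \<Longrightarrow> nm (f n) \<le> (SUP n. nm (f n))"
  using L_bdd by (intro cSUP_upper) auto

lemma L_least: "(\<And>n. nm (f n) \<le> B) \<Longrightarrow> (SUP n. nm (f n)) \<le> B"
  by (intro cSUP_least) auto

lemma L_add_in: "f \<in> ns_carrier (linf E) \<Longrightarrow> g \<in> ns_carrier (linf E) \<Longrightarrow> (\<lambda>n. pl (f n) (g n)) \<in> ns_carrier (linf E)"
proof -
  assume f: "f \<in> ns_carrier (linf E)" and g: "g \<in> ns_carrier (linf E)"
  then obtain A B where A: "\<forall>n. nm (f n) \<le> A" and B: "\<forall>n. nm (g n) \<le> B" and fg: "\<forall>n. f n \<in> V" "\<forall>n. g n \<in> V"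
    unfolding L_car by blast
  have "\<forall>n. nm (pl (f n) (g n)) \<le> max A B"
  proof
    fix n
    have "nm (pl (f n) (g n)) \<le> max (nm (f n)) (nm (g n))" using norm_ultra fg by simp
    also have "\<dots> \<le> max A B" by (rule max.mono) (use A B in auto)
    finally show "nm (pl (f n) (g n)) \<le> max A B" .
  qed
  then show ?thesis using fg unfolding L_car by auto
qed

lemma L_smul_in: "f \<in> ns_carrier (linf E) \<Longrightarrow> (\<lambda>n. sm c (f n)) \<in> ns_carrier (linf E)"
proof -
  assume f: "f \<in> ns_carrier (linf E)"
  then obtain A where A: "\<forall>n. nm (f n) \<le> A" and fg: "\<forall>n. f n \<in> V"
    unfolding L_car by blast
  have "\<forall>n. nm (sm c (f n)) \<le> av c * A"
    using norm_smul fg A av_nonneg by (simp add: mult_left_mono)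
  then show ?thesis using fg unfolding L_car by auto
qed

lemma L_zero_in: "(\<lambda>n. zr) \<in> ns_carrier (linf E)" unfolding L_car by auto

lemma VSL: "vector_space_on (linf E)"
  unfolding vector_space_on_def L_zero L_add L_smul
proof (intro conjI)
  show "(\<lambda>n. zr) \<in> ns_carrier (linf E)" by (rule L_zero_in)
  show "\<forall>x\<in>ns_carrier (linf E). \<forall>y\<in>ns_carrier (linf E). (\<lambda>n. pl (x n) (y n)) \<in> ns_carrier (linf E)"
    using L_add_in by blast
  show "\<forall>c. \<forall>x\<in>ns_carrier (linf E). (\<lambda>n. sm c (x n)) \<in> ns_carrier (linf E)"
    using L_smul_in by blast
  show "\<forall>x\<in>ns_carrier (linf E). \<forall>y\<in>ns_carrier (linf E). \<forall>z\<in>ns_carrier (linf E).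
     (\<lambda>n. pl (pl (x n) (y n)) (z n)) = (\<lambda>n. pl (x n) (pl (y n) (z n)))"
    by (simp add: L_car add_assoc)
  show "\<forall>x\<in>ns_carrier (linf E). \<forall>y\<in>ns_carrier (linf E). (\<lambda>n. pl (x n) (y n)) = (\<lambda>n. pl (y n) (x n))"
    by (auto simp: L_car fun_eq_iff intro: add_comm)
  show "\<forall>x\<in>ns_carrier (linf E). (\<lambda>n. pl zr (x n)) = x" by (simp add: L_car)
  show "\<forall>x\<in>ns_carrier (linf E). (\<lambda>n. pl (x n) (sm (- 1) (x n))) = (\<lambda>n. zr)" by (simp add: L_car)
  show "\<forall>x\<in>ns_carrier (linf E). (\<lambda>n. sm 1 (x n)) = x" by (simp add: L_car)
  show "\<forall>a b. \<forall>x\<in>ns_carrier (linf E). (\<lambda>n. sm (a * b) (x n)) = (\<lambda>n. sm a (sm b (x n)))"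
    by (simp add: L_car smul_mult)
  show "\<forall>a b. \<forall>x\<in>ns_carrier (linf E). (\<lambda>n. sm (a + b) (x n)) = (\<lambda>n. pl (sm a (x n)) (sm b (x n)))"
    by (simp add: L_car smul_distl)
  show "\<forall>a. \<forall>x\<in>ns_carrier (linf E). \<forall>y\<in>ns_carrier (linf E).
     (\<lambda>n. sm a (pl (x n) (y n))) = (\<lambda>n. pl (sm a (x n)) (sm a (y n)))"
    by (simp add: L_car smul_distr)
qed

lemma NSL: "nonarch_normed_space av (linf E)"
  unfolding nonarch_normed_space_def
proof (intro conjI)
  show "vector_space_on (linf E)" by (rule VSL)
  show "\<forall>x\<in>ns_carrier (linf E). 0 \<le> ns_norm (linf E) x"
    unfolding L_norm
  proof
    fix x assume x: "x \<in> ns_carrier (linf E)"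
    have "0 \<le> nm (x 0)" using x by (simp add: L_car)
    also have "\<dots> \<le> (SUP n. nm (x n))" by (rule L_le[OF x])
    finally show "0 \<le> (SUP n. nm (x n))" .
  qed
  show "\<forall>x\<in>ns_carrier (linf E). (ns_norm (linf E) x = 0) = (x = ns_zero (linf E))"
    unfolding L_norm L_zero
  proof (intro ballI iffI)
    fix x assume x: "x \<in> ns_carrier (linf E)" and h: "(SUP n. nm (x n)) = 0"
    have "\<forall>n. x n = zr"
    proof
      fix n
      have "nm (x n) \<le> 0" using L_le[OF x, of n] h by simp
      have xn: "x n \<in> V" using x by (simp add: L_car)
      show "x n = zr" using norm_nonneg[OF xn] norm_zero_iff[OF xn] \<open>nm (x n) \<le> 0\<close> by (metis antisym)
    qed
    then show "x = (\<lambda>n. zr)" by auto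
  qed simp
  show "\<forall>c. \<forall>x\<in>ns_carrier (linf E). ns_norm (linf E) (ns_smul (linf E) c x) = av c * ns_norm (linf E) x"
    unfolding L_norm L_smul
  proof (intro allI ballI antisym)
    fix c x assume x: "x \<in> ns_carrier (linf E)"
    then have xV: "\<And>n. x n \<in> V" by (simp add: L_car)
    show "(SUP n. nm (sm c (x n))) \<le> av c * (SUP n. nm (x n))"
      using xV L_le[OF x] av_nonneg by (intro L_least) (simp add: norm_smul mult_left_mono)
    show "av c * (SUP n. nm (x n)) \<le> (SUP n. nm (sm c (x n)))"
    proof (cases "c = 0")
      case True then show ?thesis using xV by simp
    next
      case False
      then have pos: "av c > 0" using av_zero_iff av_nonneg by (metis less_eq_real_def)
      have "(SUP n. nm (x n)) \<le> (SUP n. nm (sm c (x n))) / av c"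
      proof (intro L_least)
        fix n
        have "nm (sm c (x n)) \<le> (SUP n. nm (sm c (x n)))"
          using L_le[OF L_smul_in[OF x, of c]] by simp
        then show "nm (x n) \<le> (SUP n. nm (sm c (x n))) / av c"
          using pos xV by (simp add: norm_smul field_simps)
      qed
      then show ?thesis using pos by (simp add: field_simps)
    qed
  qed
  show "\<forall>x\<in>ns_carrier (linf E). \<forall>y\<in>ns_carrier (linf E).
      ns_norm (linf E) (ns_add (linf E) x y) \<le> max (ns_norm (linf E) x) (ns_norm (linf E) y)"
    unfolding L_norm L_add
  proof (intro ballI L_least)
    fix x y n assume x: "x \<in> ns_carrier (linf E)" and y: "y \<in> ns_carrier (linf E)"
    have "nm (pl (x n) (y n)) \<le> max (nm (x n)) (nm (y n))" using x y by (simp add: L_car norm_ultra)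
    also have "\<dots> \<le> max (SUP n. nm (x n)) (SUP n. nm (y n))" using L_le[OF x] L_le[OF y] by (rule max.mono)
    finally show "nm (pl (x n) (y n)) \<le> max (SUP n. nm (x n)) (SUP n. nm (y n))" .
  qed
qed

lemma c0_mem: "f \<in> c0 E \<longleftrightarrow> f \<in> ns_carrier (linf E) \<and> (\<lambda>n. nm (f n)) \<longlonglongrightarrow> 0"
  by (simp add: c0_def)

lemma SUBc0: "linear_subspace_on (linf E) (c0 E)"
  unfolding linear_subspace_on_def L_zero L_add L_smul
proof (intro conjI)
  show "c0 E \<subseteq> ns_carrier (linf E)" by (auto simp: c0_mem)
  show "(\<lambda>n. zr) \<in> c0 E" by (simp add: c0_mem L_zero_in)
  show "\<forall>x\<in>c0 E. \<forall>y\<in>c0 E. (\<lambda>n. pl (x n) (y n)) \<in> c0 E"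
  proof (intro ballI)
    fix x y assume x: "x \<in> c0 E" and y: "y \<in> c0 E"
    then have xy: "x \<in> ns_carrier (linf E)" "y \<in> ns_carrier (linf E)" by (auto simp: c0_mem)
    then have V: "\<And>n. x n \<in> V" "\<And>n. y n \<in> V" by (auto simp: L_car)
    have xl: "(\<lambda>n. nm (x n)) \<longlonglongrightarrow> 0" and yl: "(\<lambda>n. nm (y n)) \<longlonglongrightarrow> 0" using x y by (auto simp: c0_mem)
    have sl: "(\<lambda>n. nm (x n) + nm (y n)) \<longlonglongrightarrow> 0 + 0" by (rule tendsto_add[OF xl yl])
    have "(\<lambda>n. nm (pl (x n) (y n))) \<longlonglongrightarrow> 0"
    proof (rule tendsto_sandwich[of "\<lambda>n. 0" _ _ "\<lambda>n. nm (x n) + nm (y n)"])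
      show "\<forall>\<^sub>F n in sequentially. 0 \<le> nm (pl (x n) (y n))" using V by simp
      show "\<forall>\<^sub>F n in sequentially. nm (pl (x n) (y n)) \<le> nm (x n) + nm (y n)"
      proof (intro always_eventually allI)
        fix n
        have "nm (pl (x n) (y n)) \<le> max (nm (x n)) (nm (y n))" using V norm_ultra by simp
        then show "nm (pl (x n) (y n)) \<le> nm (x n) + nm (y n)"
          using norm_nonneg[OF V(1)[of n]] norm_nonneg[OF V(2)[of n]] by (simp add: max_def split: if_splits)
      qed
      show "(\<lambda>n. nm (x n) + nm (y n)) \<longlonglongrightarrow> 0" using sl by simp
    qed simp
    then show "(\<lambda>n. pl (x n) (y n)) \<in> c0 E" using L_add_in[OF xy] by (simp add: c0_mem)
  qed
  show "\<forall>c. \<forall>x\<in>c0 E. (\<lambda>n. sm c (x n)) \<in> c0 E"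
  proof (intro allI ballI)
    fix c x assume x: "x \<in> c0 E"
    then have xy: "x \<in> ns_carrier (linf E)" by (auto simp: c0_mem)
    then have V: "\<And>n. x n \<in> V" by (auto simp: L_car)
    have xl: "(\<lambda>n. nm (x n)) \<longlonglongrightarrow> 0" using x by (auto simp: c0_mem)
    have "(\<lambda>n. av c * nm (x n)) \<longlonglongrightarrow> av c * 0" by (rule tendsto_mult[OF tendsto_const xl])
    then show "(\<lambda>n. sm c (x n)) \<in> c0 E" using L_smul_in[OF xy] V by (simp add: c0_mem norm_smul)
  qed
qed

lemma CLc0: "closed_in_ns (linf E) (c0 E)"
  unfolding closed_in_ns_def L_norm L_sub
proof (intro ballI impI)
  fix x assume x: "x \<in> ns_carrier (linf E)" and h: "\<forall>e>0. \<exists>w\<in>c0 E. (SUP n. nm (mi (x n) (w n))) < e"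
  have xV: "\<And>n. x n \<in> V" using x by (simp add: L_car)
  have "(\<lambda>n. nm (x n)) \<longlonglongrightarrow> 0"
    unfolding LIMSEQ_iff
  proof (intro allI impI)
    fix e :: real assume "e > 0"
    then obtain w where w: "w \<in> c0 E" "(SUP n. nm (mi (x n) (w n))) < e" using h by auto
    have wl: "w \<in> ns_carrier (linf E)" "(\<lambda>n. nm (w n)) \<longlonglongrightarrow> 0" using w by (auto simp: c0_mem)
    have wV: "\<And>n. w n \<in> V" using wl by (simp add: L_car)
    obtain N where N: "\<forall>n\<ge>N. norm (nm (w n) - 0) < e" using wl(2) \<open>e > 0\<close> unfolding LIMSEQ_iff by blast
    have "\<forall>n\<ge>N. norm (nm (x n) - 0) < e"
    proof (intro allI impI)
      fix n assume "n \<ge> N"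
      have "nm (mi (x n) (w n)) \<le> (SUP n. nm (mi (x n) (w n)))"
        using L_le[of "\<lambda>n. mi (x n) (w n)" n] L_add_in[OF x L_smul_in[OF wl(1), of "-1"]]
        by (simp add: sub_def')
      then have a: "nm (mi (w n) (x n)) < e" using w(2) norm_sub_comm xV wV by simp
      have b: "nm (w n) < e" using N \<open>n \<ge> N\<close> wV by simp
      have "nm (x n) \<le> max (nm (w n)) (nm (mi (w n) (x n)))" using norm_le_max_sub xV wV by blast
      then show "norm (nm (x n) - 0) < e" using a b xV by simp
    qed
    then show "\<exists>no. \<forall>n\<ge>no. norm (nm (x n) - 0) < e" by blast
  qed
  then show "x \<in> c0 E" using x by (simp add: c0_mem)
qed

end

context nns
begin

lemma LQ: "nnsq av (linf E) (c0 E)"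
  unfolding nnsq_def nns_def nnsq_axioms_def using AV NSL SUBc0 CLc0 by auto

lemma L_sub_in: "f \<in> ns_carrier (linf E) \<Longrightarrow> g \<in> ns_carrier (linf E) \<Longrightarrow> (\<lambda>n. mi (f n) (g n)) \<in> ns_carrier (linf E)"
  using L_add_in[of f "\<lambda>n. sm (-1) (g n)"] L_smul_in[of g "-1"] by (simp add: sub_def')

lemma Qchar:
  assumes f: "f \<in> ns_carrier (linf E)"
  shows "Inf (ns_norm (linf E) ` ns_coset (linf E) (c0 E) f) \<le> r \<longleftrightarrow> (\<forall>e>0. \<exists>N. \<forall>k\<ge>N. nm (f k) \<le> r + e)"
proof -
  interpret L: nnsq av "linf E" "c0 E" by (rule LQ)
  have fV: "\<And>k. f k \<in> V" using f by (simp add: L_car)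
  show ?thesis
  proof
    assume h: "Inf (ns_norm (linf E) ` ns_coset (linf E) (c0 E) f) \<le> r"
    show "\<forall>e>0. \<exists>N. \<forall>k\<ge>N. nm (f k) \<le> r + e"
    proof (intro allI impI)
      fix e :: real assume e: "e > 0"
      have r0: "r \<ge> 0" using h L.Qn_nonneg[OF f] by simp
      obtain g where g: "g \<in> ns_coset (linf E) (c0 E) f" "ns_norm (linf E) g < r + e"
        using L.Qn_lt[OF f, of "r + e"] h e by force
      have gL: "g \<in> ns_carrier (linf E)" and d: "(\<lambda>k. mi (g k) (f k)) \<in> c0 E"
        using g(1) L.mem_cs[OF f] by (auto simp: L_sub)
      have gV: "\<And>k. g k \<in> V" using gL by (simp add: L_car)
      have "(\<lambda>k. nm (mi (g k) (f k))) \<longlonglongrightarrow> 0" using d by (simp add: c0_mem)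
      then obtain N where N: "\<forall>k\<ge>N. norm (nm (mi (g k) (f k)) - 0) < r + e"
        using r0 e unfolding LIMSEQ_iff by (meson add_nonneg_pos)
      have "\<forall>k\<ge>N. nm (f k) \<le> r + e"
      proof (intro allI impI)
        fix k assume "k \<ge> N"
        have a: "nm (mi (g k) (f k)) < r + e" using N \<open>k \<ge> N\<close> gV fV by simp
        have b: "nm (g k) < r + e" using L_le[OF gL, of k] g(2) by (simp add: L_norm)
        have "nm (f k) \<le> max (nm (g k)) (nm (mi (g k) (f k)))" using norm_le_max_sub gV fV by blast
        then show "nm (f k) \<le> r + e" using a b by simp
      qed
      then show "\<exists>N. \<forall>k\<ge>N. nm (f k) \<le> r + e" by blast
    qed
  next
    assume h: "\<forall>e>0. \<exists>N. \<forall>k\<ge>N. nm (f k) \<le> r + e"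
    show "Inf (ns_norm (linf E) ` ns_coset (linf E) (c0 E) f) \<le> r"
    proof (rule field_le_epsilon)
      fix e :: real assume e: "e > 0"
      obtain N where N: "\<forall>k\<ge>N. nm (f k) \<le> r + e" using h e by blast
      have re: "0 \<le> r + e" using N[rule_format, of N] norm_nonneg[OF fV[of N]] by simp
      define g where "g = (\<lambda>k. if k < N then zr else f k)"
      have gV: "\<And>k. g k \<in> V" using fV by (simp add: g_def)
      have gle: "\<And>k. nm (g k) \<le> nm (f k)" using fV by (simp add: g_def)
      obtain B where B: "\<forall>k. nm (f k) \<le> B" using f by (auto simp: L_car)
      have gL: "g \<in> ns_carrier (linf E)" unfolding L_car using gV gle B by (meson order_trans)
      have "\<forall>\<^sub>F k in sequentially. nm (mi (g k) (f k)) = 0"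
        unfolding eventually_sequentially using fV by (intro exI[of _ N]) (simp add: g_def)
      then have "(\<lambda>k. nm (mi (g k) (f k))) \<longlonglongrightarrow> 0" by (rule tendsto_eventually)
      then have "(\<lambda>k. mi (g k) (f k)) \<in> c0 E" using L_sub_in[OF gL f] by (simp add: c0_mem)
      then have "g \<in> ns_coset (linf E) (c0 E) f" using L.mem_cs[OF f] gL by (simp add: L_sub)
      then have "Inf (ns_norm (linf E) ` ns_coset (linf E) (c0 E) f) \<le> ns_norm (linf E) g"
        using L.Qn_le[OF f] by simp
      also have "\<dots> \<le> r + e" unfolding L_norm
      proof (rule L_least)
        fix k show "nm (g k) \<le> r + e" using N re by (simp add: g_def)
      qed
      finally show "Inf (ns_norm (linf E) ` ns_coset (linf E) (c0 E) f) \<le> r + e" .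
    qed
  qed
qed

lemma const_L: "x \<in> V \<Longrightarrow> (\<lambda>n. x) \<in> ns_carrier (linf E)" by (auto simp: L_car)

lemma diag_iso: "linear_isometry E (quot (linf E) (c0 E)) (diag_map E)"
proof -
  interpret L: nnsq av "linf E" "c0 E" by (rule LQ)
  show ?thesis
    unfolding linear_isometry_def diag_map_def
  proof (intro conjI ballI allI)
    fix x assume x: "x \<in> V"
    show "ns_coset (linf E) (c0 E) (\<lambda>n. x) \<in> ns_carrier (quot (linf E) (c0 E))"
      using const_L[OF x] by (simp add: L.Q_car)
    let ?I = "Inf (ns_norm (linf E) ` ns_coset (linf E) (c0 E) (\<lambda>n. x))"
    have le: "?I \<le> nm x" using Qchar[OF const_L[OF x]] by auto
    have hh: "\<exists>N. \<forall>k::nat\<ge>N. nm ((\<lambda>n. x) k) \<le> ?I + e" if "e > 0" for e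
      using Qchar[OF const_L[OF x], of ?I] that by (meson order_refl)
    have ge: "nm x \<le> ?I"
    proof (rule field_le_epsilon)
      fix e :: real assume "e > 0"
      then obtain N where N: "\<forall>k::nat\<ge>N. nm ((\<lambda>n. x) k) \<le> ?I + e" using hh by blast
      show "nm x \<le> ?I + e" using N[rule_format, of N] by simp
    qed
    show "ns_norm (quot (linf E) (c0 E)) (ns_coset (linf E) (c0 E) (\<lambda>n. x)) = nm x"
      using le ge by (simp add: L.Q_norm)
  next
    fix x y assume x: "x \<in> V" and y: "y \<in> V"
    show "ns_coset (linf E) (c0 E) (\<lambda>n. pl x y) =
       ns_add (quot (linf E) (c0 E)) (ns_coset (linf E) (c0 E) (\<lambda>n. x)) (ns_coset (linf E) (c0 E) (\<lambda>n. y))"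
      using L.Q_add[OF const_L[OF x] const_L[OF y]] by (simp add: L_add)
  next
    fix c x assume x: "x \<in> V"
    show "ns_coset (linf E) (c0 E) (\<lambda>n. sm c x) =
       ns_smul (quot (linf E) (c0 E)) c (ns_coset (linf E) (c0 E) (\<lambda>n. x))"
      using L.Q_smul[OF const_L[OF x]] by (simp add: L_smul)
  qed
qed

end

context nns
begin

lemma sph: "spherically_complete (quot (linf E) (c0 E))"
  unfolding spherically_complete_def
proof (intro allI impI)
  interpret L: nnsq av "linf E" "c0 E" by (rule LQ)
  let ?Q = "quot (linf E) (c0 E)"
  let ?cc = "ns_coset (linf E) (c0 E)"
  let ?B = "\<lambda>C (s::real). ns_cball ?Q C s"
  fix c :: "nat \<Rightarrow> (nat \<Rightarrow> 'v) set" and r :: "nat \<Rightarrow> real"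
  assume H: "(\<forall>n. c n \<in> ns_carrier ?Q \<and> 0 \<le> r n) \<and> (\<forall>n. ?B (c (Suc n)) (r (Suc n)) \<subseteq> ?B (c n) (r n))"
  have "\<forall>n. \<exists>g. g \<in> ns_carrier (linf E) \<and> c n = ?cc g"
  proof
    fix n
    have "c n \<in> ?cc ` ns_carrier (linf E)" using H L.Q_car by auto
    then obtain g where "g \<in> ns_carrier (linf E)" "c n = ?cc g" by (rule imageE) auto
    then show "\<exists>g. g \<in> ns_carrier (linf E) \<and> c n = ?cc g" by blast
  qed
  then obtain f where f: "\<And>n. f n \<in> ns_carrier (linf E)" "\<And>n. c n = ?cc (f n)"
    using choice[of "\<lambda>n g. g \<in> ns_carrier (linf E) \<and> c n = ?cc g"] by blast
  have fV: "\<And>n k. f n k \<in> V" using f(1) by (simp add: L_car)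
  have r0: "\<And>n. r n \<ge> 0" using H by blast
  have mono: "?B (c m) (r m) \<subseteq> ?B (c n) (r n)" if "n \<le> m" for n m
    using lift_Suc_antimono_le[of "\<lambda>n. ?B (c n) (r n)", OF _ that] H by blast
  have self: "c m \<in> ?B (c m) (r m)" for m
  proof -
    have "ns_sub ?Q (c m) (c m) = ?cc (ns_zero (linf E))"
      using f L.Q_sub[OF f(1) f(1), of m m] by simp
    then have "ns_norm ?Q (ns_sub ?Q (c m) (c m)) = 0"
      using L.Qn_zero[of "ns_zero (linf E)"] by (simp add: L.Q_norm)
    then show ?thesis using r0[of m] H unfolding ns_cball_def by auto
  qed
  have close: "\<exists>N. \<forall>k\<ge>N. nm (mi (f m k) (f n k)) \<le> r n + e" if "n \<le> m" "e > 0" for n m e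
  proof -
    have "c m \<in> ?B (c n) (r n)" using mono[OF that(1)] self[of m] by blast
    then have "ns_norm ?Q (ns_sub ?Q (c m) (c n)) \<le> r n" unfolding ns_cball_def by blast
    then have "Inf (ns_norm (linf E) ` ?cc (\<lambda>k. mi (f m k) (f n k))) \<le> r n"
      using L.Q_sub[OF f(1) f(1), of m n] f(2) by (simp add: L.Q_norm L_sub)
    then show ?thesis using Qchar[OF L_sub_in[OF f(1)[of m] f(1)[of n]], of "r n"] that(2) by simp
  qed
  have ex: "\<exists>M\<ge>n. \<forall>k\<ge>M. \<forall>j\<le>n. nm (mi (f n k) (f j k)) \<le> r j + 1 / (real n + 1)" for n
  proof -
    have "\<forall>j\<in>{..n}. eventually (\<lambda>k. nm (mi (f n k) (f j k)) \<le> r j + 1 / (real n + 1)) sequentially"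
      using close by (auto simp: eventually_sequentially)
    then have "eventually (\<lambda>k. \<forall>j\<in>{..n}. nm (mi (f n k) (f j k)) \<le> r j + 1 / (real n + 1)) sequentially"
      by (intro eventually_ball_finite) auto
    then obtain M0 where M0: "\<forall>k\<ge>M0. \<forall>j\<in>{..n}. nm (mi (f n k) (f j k)) \<le> r j + 1 / (real n + 1)"
      unfolding eventually_sequentially by blast
    show ?thesis using M0 by (intro exI[of _ "max M0 n"]) auto
  qed
  have "\<forall>n. \<exists>M. M \<ge> n \<and> (\<forall>k\<ge>M. \<forall>j\<le>n. nm (mi (f n k) (f j k)) \<le> r j + 1 / (real n + 1))"
    using ex by blast
  from choice[OF this] obtain N where NN: "\<forall>n. N n \<ge> n \<and> (\<forall>k\<ge>N n. \<forall>j\<le>n. nm (mi (f n k) (f j k)) \<le> r j + 1 / (real n + 1))"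
    by (rule exE)
  have N1: "\<And>n. N n \<ge> n" using NN by blast
  have N2: "\<And>n k j. k \<ge> N n \<Longrightarrow> j \<le> n \<Longrightarrow> nm (mi (f n k) (f j k)) \<le> r j + 1 / (real n + 1)"
    using NN by blast
  define S where "S k = {n. n \<le> k \<and> (n = 0 \<or> N n \<le> k)}" for k
  define idx where "idx k = Max (S k)" for k
  have Sfin: "finite (S k)" for k unfolding S_def by (rule finite_subset[of _ "{..k}"]) auto
  have S0: "0 \<in> S k" for k unfolding S_def by simp
  have idx_in: "idx k \<in> S k" for k unfolding idx_def using Sfin S0 by (intro Max_in) auto
  have idx_ge: "idx k \<ge> J" if "k \<ge> N J" for k J
  proof -
    have "J \<in> S k" unfolding S_def using that N1[of J] by auto
    then show ?thesis unfolding idx_def using Sfin by (intro Max_ge) auto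
  qed
  define y where "y k = f (idx k) k" for k
  have yV: "y k \<in> V" for k unfolding y_def by (rule fV)
  have K: "nm (mi (y k) (f j k)) \<le> r j + 1 / (real J + 1)" if "k \<ge> N J" "j \<le> J" for k j J
  proof -
    let ?n = "idx k"
    have "?n \<ge> J" using idx_ge[OF that(1)] .
    have "k \<ge> N ?n"
    proof (cases "?n = 0")
      case True then show ?thesis using \<open>?n \<ge> J\<close> that(1) by simp
    next
      case False then show ?thesis using idx_in[of k] unfolding S_def by auto
    qed
    then have "nm (mi (y k) (f j k)) \<le> r j + 1 / (real ?n + 1)"
      unfolding y_def using N2[of ?n k j] that(2) \<open>?n \<ge> J\<close> by simp
    also have "\<dots> \<le> r j + 1 / (real J + 1)" using \<open>?n \<ge> J\<close> by (simp add: frac_le)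
    finally show ?thesis .
  qed
  obtain B0 where B0: "\<forall>k. nm (f 0 k) \<le> B0" using f(1)[of 0] by (auto simp: L_car)
  have ybd: "nm (y k) \<le> max B0 (r 0 + 1)" for k
  proof (cases "idx k = 0")
    case True then show ?thesis using B0 by (simp add: y_def le_max_iff_disj)
  next
    case False
    then have "k \<ge> N (idx k)" using idx_in[of k] unfolding S_def by auto
    then have "nm (mi (y k) (f 0 k)) \<le> r 0 + 1 / (real (idx k) + 1)"
      unfolding y_def using N2[of "idx k" k 0] by simp
    also have "\<dots> \<le> r 0 + 1" by simp
    finally have a: "nm (mi (f 0 k) (y k)) \<le> r 0 + 1" using norm_sub_comm[OF yV fV] by simp
    have "nm (y k) \<le> max (nm (f 0 k)) (nm (mi (f 0 k) (y k)))" using norm_le_max_sub[OF fV yV] .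
    then show ?thesis using a B0[rule_format, of k] by (simp add: max_def split: if_splits)
  qed
  have yL: "y \<in> ns_carrier (linf E)" unfolding L_car using yV ybd by blast
  have "?cc y \<in> ?B (c j) (r j)" for j
  proof -
    have "\<exists>M. \<forall>k\<ge>M. nm (mi (y k) (f j k)) \<le> r j + e" if epos: "e > 0" for e
    proof -
      obtain n0 where n0: "inverse (real (Suc n0)) < e" using reals_Archimedean[OF epos] by auto
      let ?J = "max j n0"
      have "1 / (real ?J + 1) \<le> 1 / (real n0 + 1)" by (simp add: frac_le)
      also have "\<dots> < e" using n0 by (simp add: inverse_eq_divide add.commute)
      finally have "1 / (real ?J + 1) < e" .
      then have "\<forall>k\<ge>N ?J. nm (mi (y k) (f j k)) \<le> r j + e" using K[of ?J _ j] by force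
      then show ?thesis by blast
    qed
    then have "Inf (ns_norm (linf E) ` ?cc (\<lambda>k. mi (y k) (f j k))) \<le> r j"
      using Qchar[OF L_sub_in[OF yL f(1)[of j]], of "r j"] by simp
    then have "ns_norm ?Q (ns_sub ?Q (?cc y) (c j)) \<le> r j"
      using L.Q_sub[OF yL f(1), of j] f(2) by (simp add: L.Q_norm L_sub)
    moreover have "?cc y \<in> ns_carrier ?Q" using yL by (simp add: L.Q_car)
    ultimately show ?thesis unfolding ns_cball_def by blast
  qed
  then show "(\<Inter>n. ?B (c n) (r n)) \<noteq> {}" by blast
qed

end

theorem proposition6p1:
  fixes av :: "'k::field \<Rightarrow> real" and E :: "('k, 'v) nspace"
  assumes "nonarch_abs_field av"
    and "nonarch_normed_space av E"
  shows "nonarch_normed_space av (linf E)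
       \<and> linear_subspace_on (linf E) (c0 E)
       \<and> closed_in_ns (linf E) (c0 E)
       \<and> nonarch_normed_space av (quot (linf E) (c0 E))
       \<and> spherically_complete (quot (linf E) (c0 E))
       \<and> linear_isometry E (quot (linf E) (c0 E)) (diag_map E)
       \<and> (\<exists>(F :: ('k, (nat \<Rightarrow> 'v) set) nspace) j.
            nonarch_normed_space av F \<and> spherically_complete F \<and> linear_isometry E F j)"
proof -
  interpret nns av E using assms by (unfold_locales) auto
  interpret L: nnsq av "linf E" "c0 E" by (rule LQ)
  show ?thesis using NSL SUBc0 CLc0 L.NSQ sph diag_iso by blast
qed

end
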